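(* Assume (CVX), (SM) and (BV). Fix $i\in[n]$ and a round $p$ of PEARL-SGD, and suppose $\gamma_k\equiv\gamma$ for $k=\tau p,\dots,\tau(p+1)-1$, where $0<\gamma\le\frac{1}{L_i}\min\{1,\frac{1}{\tau-1}\}$ (with $\frac{1}{\tau-1}=+\infty$ when $\tau=1$). Then for every $t=0,\dots,\tau$, $$\mathbb{E}\big[\|x^i_{\tau p}-x^i_{\tau p+t}\|^2\,\big|\,\mathbf{x}_{\tau p}\big]\le\gamma^2t^2\|\nabla f_i(x^i_{\tau p};x^{-i}_{\tau p})\|^2+\gamma^2t\big(1+2(t-1)(t+1)\gamma L_i\big)\sigma_i^2.$$
   Context: Setup. Let $n\ge1$, $D=d_1+\dots+d_n$, joint action $\mathbf{x}=(x^1,\dots,x^n)\in\mathbb{R}^D$, $x^i\in\mathbb{R}^{d_i}$, $x^{-i}$ all blocks except the $i$-th, $f_i(x^i;x^{-i})=f_i(\mathbf{x})$. For each $i$, $f_i(\mathbf{x})=\mathbb{E}_{\xi\sim\mathcal{D}_i}[f_{i,\xi}(\mathbf{x})]$; $\nabla f_i(x^i;x^{-i})$, $\nabla f_{i,\xi}(x^i;x^{-i})$ are gradients in $x^i$ only, with $\mathbb{E}_{\xi\sim\mathcal{D}_i}[\nabla f_{i,\xi}(x^i;x^{-i})]=\nabla f_i(x^i;x^{-i})$. (CVX): each $f_i(\cdot;x^{-i})$ is convex. (SM): $\|\nabla f_i(x^i;x^{-i})-\nabla f_i(y^i;x^{-i})\|\le L_i\|x^i-y^i\|$. (BV): $\mathbb{E}_{\xi\sim\mathcal{D}_i}\|\nabla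 f_{i,\xi}(x^i;x^{-i})-\nabla f_i(x^i;x^{-i})\|^2\le\sigma_i^2$ for all $x^i,x^{-i}$. PEARL-SGD: given $\mathbf{x}_0$, $\tau\ge1$, $R\ge1$, step-sizes $\gamma_k>0$: for $p=0,\dots,R-1$, each $i$, $k=\tau p,\dots,\tau(p+1)-1$, draw $\xi^i_k\sim\mathcal{D}_i$ independently of the past and set $x^i_{k+1}=x^i_k-\gamma_k\nabla f_{i,\xi^i_k}(x^i_k;x^{-i}_{\tau p})$; $\mathbf{x}_k=(x^1_k,\dots,x^n_k)$. *)

theory Defs
  imports "HOL-Probability.Probability"
begin

text \<open>Local PEARL-SGD iterates of player i during one round, started at
  x^i_{tau p} = y with the other players frozen at x^{-i}_{tau p} = z,
  constant step size gam, and sample sequence xs (xs k is the sample used at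
  local step k, i.e. at global step tau p + k).\<close>
fun pearl_local ::
  "('b \<Rightarrow> 'a::real_vector \<Rightarrow> 'o \<Rightarrow> 'a) \<Rightarrow> real \<Rightarrow> 'a \<Rightarrow> 'o \<Rightarrow> (nat \<Rightarrow> 'b) \<Rightarrow> nat \<Rightarrow> 'a" where
  "pearl_local g gam y z xs 0 = y"
| "pearl_local g gam y z xs (Suc k) =
     pearl_local g gam y z xs k - gam *\<^sub>R g (xs k) (pearl_local g gam y z xs k) z"

end

theory Submission
  imports Defs
begin

lemma line_deriv:
  fixes f :: "'a::real_inner \<Rightarrow> real"
  assumes "\<And>u. (f has_derivative (\<lambda>h. G u \<bullet> h)) (at u)"
  shows "((\<lambda>s. f (u + s *\<^sub>R d)) has_real_derivative (G (u + s *\<^sub>R d) \<bullet> d)) (at s)"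
proof -
  have l: "((\<lambda>s. u + s *\<^sub>R d) has_derivative (\<lambda>s. s *\<^sub>R d)) (at s)"
    by (auto intro!: derivative_eq_intros)
  have "((\<lambda>s. f (u + s *\<^sub>R d)) has_derivative (\<lambda>s'. G (u + s *\<^sub>R d) \<bullet> (s' *\<^sub>R d))) (at s)"
    using diff_chain_at[OF l assms[of "u + s *\<^sub>R d"]] by (simp add: o_def)
  then show ?thesis
    unfolding has_field_derivative_def
    by (rule has_derivative_eq_rhs) (auto simp: fun_eq_iff)
qed

lemma tangent_ineq:
  fixes f :: "'a::real_inner \<Rightarrow> real"
  assumes cvx: "convex_on UNIV f" and der: "\<And>u. (f has_derivative (\<lambda>h. G u \<bullet> h)) (at u)"
  shows "G u \<bullet> (w - u) \<le> f w - f u"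
proof -
  define h where "h s = f (u + s *\<^sub>R (w - u))" for s
  have ch: "convex_on UNIV h"
  proof (rule convex_onI)
    fix t a b :: real assume t: "0 < t" "t < 1"
    have "u + ((1 - t) *\<^sub>R a + t *\<^sub>R b) *\<^sub>R (w - u)
        = (1 - t) *\<^sub>R (u + a *\<^sub>R (w - u)) + t *\<^sub>R (u + b *\<^sub>R (w - u))"
      by (simp add: algebra_simps)
    then show "h ((1 - t) *\<^sub>R a + t *\<^sub>R b) \<le> (1 - t) * h a + t * h b"
      unfolding h_def using convex_onD[OF cvx, of t] t by simp
  qed simp
  have d: "(h has_real_derivative (G u \<bullet> (w - u))) (at 0 within UNIV)"
    unfolding h_def using line_deriv[OF der, of u "w - u" 0] by simp
  have "h 1 - h 0 \<ge> (G u \<bullet> (w - u)) * (1 - 0)"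
    by (rule convex_on_imp_above_tangent[OF ch _ _ _ d]) auto
  then show ?thesis unfolding h_def by simp
qed

lemma descent_ineq:
  fixes f :: "'a::real_inner \<Rightarrow> real"
  assumes der: "\<And>u. (f has_derivative (\<lambda>h. G u \<bullet> h)) (at u)"
    and lip: "\<And>u v. norm (G u - G v) \<le> L * norm (u - v)"
  shows "f w \<le> f u + G u \<bullet> (w - u) + L / 2 * (norm (w - u))\<^sup>2"
proof -
  define d where "d = w - u"
  define k where "k s = f (u + s *\<^sub>R d) - s * (G u \<bullet> d) - L / 2 * s\<^sup>2 * (norm d)\<^sup>2" for s
  have "k 1 \<le> k 0"
  proof (rule DERIV_nonpos_imp_nonincreasing[of 0 1 k])
    fix s :: real assume s: "0 \<le> s" "s \<le> 1"
    have D: "(k has_real_derivative (G (u + s *\<^sub>R d) \<bullet> d - G u \<bullet> d - L * s * (norm d)\<^sup>2)) (at s)"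
      unfolding k_def
      by (rule derivative_eq_intros line_deriv[OF der] | simp)+
    have "G (u + s *\<^sub>R d) \<bullet> d - G u \<bullet> d = (G (u + s *\<^sub>R d) - G u) \<bullet> d"
      by (simp add: inner_diff_left)
    also have "\<dots> \<le> norm (G (u + s *\<^sub>R d) - G u) * norm d"
      by (rule norm_cauchy_schwarz)
    also have "\<dots> \<le> (L * norm (s *\<^sub>R d)) * norm d"
      using lip[of "u + s *\<^sub>R d" u] by (intro mult_right_mono) auto
    also have "\<dots> = L * s * (norm d)\<^sup>2"
      using s by (simp add: power2_eq_square)
    finally show "\<exists>y. (k has_real_derivative y) (at s) \<and> y \<le> 0"
      using D by (intro exI[of _ "G (u + s *\<^sub>R d) \<bullet> d - G u \<bullet> d - L * s * (norm d)\<^sup>2"]) auto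
  qed simp
  then show ?thesis unfolding k_def d_def by simp
qed

lemma half_cocoercive:
  fixes f :: "'a::real_inner \<Rightarrow> real"
  assumes cvx: "convex_on UNIV f" and der: "\<And>u. (f has_derivative (\<lambda>h. G u \<bullet> h)) (at u)"
    and lip: "\<And>u v. norm (G u - G v) \<le> L * norm (u - v)" and L: "L > 0"
  shows "G u \<bullet> (w - u) + (norm (G w - G u))\<^sup>2 / (2 * L) \<le> f w - f u"
proof -
  define r where "r = G w - G u"
  define w' where "w' = w - (1 / L) *\<^sub>R r"
  have t: "G u \<bullet> (w' - u) \<le> f w' - f u" by (rule tangent_ineq[OF cvx der])
  have d: "f w' \<le> f w + G w \<bullet> (w' - w) + L / 2 * (norm (w' - w))\<^sup>2"
    by (rule descent_ineq[OF der lip])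
  have e1: "G u \<bullet> (w' - u) = G u \<bullet> (w - u) - (1 / L) * (G u \<bullet> r)"
    unfolding w'_def by (simp add: inner_diff_right algebra_simps)
  have e2: "G w \<bullet> (w' - w) = - ((1 / L) * (G w \<bullet> r))"
    unfolding w'_def by simp
  have e3: "(norm (w' - w))\<^sup>2 = (norm r)\<^sup>2 / L\<^sup>2"
    unfolding w'_def using L by (simp add: power_divide)
  have e4: "G w \<bullet> r - G u \<bullet> r = (norm r)\<^sup>2"
    unfolding r_def by (simp add: inner_diff_left power2_norm_eq_inner)
  have "L / 2 * ((norm r)\<^sup>2 / L\<^sup>2) = (norm r)\<^sup>2 / (2 * L)"
    using L by (simp add: power2_eq_square field_simps)
  moreover have "(1 / L) * (G w \<bullet> r) - (1 / L) * (G u \<bullet> r) = (norm r)\<^sup>2 / L"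
    proof -
    have "(1 / L) * (G w \<bullet> r) - (1 / L) * (G u \<bullet> r) = (G w \<bullet> r - G u \<bullet> r) / L" by (simp add: diff_divide_distrib)
    then show ?thesis using e4 by simp
  qed
  moreover have "(norm r)\<^sup>2 / L = 2 * ((norm r)\<^sup>2 / (2 * L))" using L by simp
  ultimately have q: "(1 / L) * (G w \<bullet> r) - (1 / L) * (G u \<bullet> r) = 2 * ((norm r)\<^sup>2 / (2 * L))"
    and eq1: "L / 2 * ((norm r)\<^sup>2 / L\<^sup>2) = (norm r)\<^sup>2 / (2 * L)"
    by linarith+
  have d0: "f w' \<le> f w + - ((1 / L) * (G w \<bullet> r)) + L / 2 * ((norm r)\<^sup>2 / L\<^sup>2)"
    using d by (simp only: e2 e3)
  have d': "f w' \<le> f w - (1 / L) * (G w \<bullet> r) + (norm r)\<^sup>2 / (2 * L)"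
    using d0 eq1 by linarith
  show ?thesis using t d' e1 q unfolding r_def[symmetric] by linarith
qed

lemma cocoercive:
  fixes f :: "'a::real_inner \<Rightarrow> real"
  assumes cvx: "convex_on UNIV f" and der: "\<And>u. (f has_derivative (\<lambda>h. G u \<bullet> h)) (at u)"
    and lip: "\<And>u v. norm (G u - G v) \<le> L * norm (u - v)" and L: "L > 0"
  shows "(norm (G w - G u))\<^sup>2 \<le> L * ((G w - G u) \<bullet> (w - u))"
proof -
  have a: "G u \<bullet> (w - u) + (norm (G w - G u))\<^sup>2 / (2 * L) \<le> f w - f u"
    by (rule half_cocoercive[OF cvx der lip L])
  have b: "G w \<bullet> (u - w) + (norm (G u - G w))\<^sup>2 / (2 * L) \<le> f u - f w"
    by (rule half_cocoercive[OF cvx der lip L])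
  have n: "norm (G u - G w) = norm (G w - G u)" by (rule norm_minus_commute)
  have i: "G w \<bullet> (u - w) = - (G w \<bullet> (w - u))"
    by (simp add: inner_diff_right)
  have "(norm (G w - G u))\<^sup>2 / L \<le> (G w - G u) \<bullet> (w - u)"
  proof -
    have j: "(G w - G u) \<bullet> (w - u) = G w \<bullet> (w - u) - G u \<bullet> (w - u)"
      by (simp add: inner_diff_left)
    have k: "(norm (G w - G u))\<^sup>2 / L = 2 * ((norm (G w - G u))\<^sup>2 / (2 * L))" by simp
    show ?thesis using a b[unfolded n] i j k by linarith
  qed
  then have "L * ((norm (G w - G u))\<^sup>2 / L) \<le> L * ((G w - G u) \<bullet> (w - u))"
    using L by (intro mult_left_mono) auto
  then show ?thesis using L by simp
qed


lemma grad_step: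
  fixes f :: "'a::real_inner \<Rightarrow> real"
  assumes cvx: "convex_on UNIV f" and der: "\<And>u. (f has_derivative (\<lambda>h. G u \<bullet> h)) (at u)"
    and lip: "\<And>u v. norm (G u - G v) \<le> L * norm (u - v)" and L: "L > 0"
    and gam: "\<gamma> > 0" "\<gamma> * L \<le> 1"
  shows "(norm (G (x - \<gamma> *\<^sub>R q)))\<^sup>2 \<le> (norm (G x))\<^sup>2 + \<gamma> * L * (norm (q - G x))\<^sup>2"
proof -
  define D where "D = G (x - \<gamma> *\<^sub>R q) - G x"
  define e where "e = q - G x"
  define c where "c = \<gamma> * L"
  define A where "A = (norm D)\<^sup>2"
  define P where "P = D \<bullet> G x"
  define B where "B = D \<bullet> e"
  define E where "E = (norm e)\<^sup>2"
  have c: "0 < c" "c \<le> 1" using gam L unfolding c_def by auto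
  have co: "A \<le> L * (D \<bullet> ((x - \<gamma> *\<^sub>R q) - x))"
    unfolding A_def D_def by (rule cocoercive[OF cvx der lip L])
  have eqD: "D \<bullet> ((x - \<gamma> *\<^sub>R q) - x) = - \<gamma> * (P + B)"
    unfolding P_def B_def e_def by (simp add: inner_diff_right inner_add_right algebra_simps)
  have "L * (- \<gamma> * (P + B)) = - (c * P) - c * B" unfolding c_def by (simp add: algebra_simps)
  then have h1: "A \<le> - (c * P) - c * B" using co[unfolded eqD] by linarith
  have "0 \<le> (norm (D + c *\<^sub>R e))\<^sup>2" by simp
  also have "(norm (D + c *\<^sub>R e))\<^sup>2 = A + 2 * (c * B) + c\<^sup>2 * E"
    unfolding A_def B_def E_def power2_norm_eq_inner
    by (simp add: inner_add_left inner_add_right inner_commute algebra_simps power2_eq_square)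
  finally have h2: "0 \<le> A + 2 * (c * B) + c\<^sup>2 * E" .
  have h3: "0 \<le> (1 - c) * A" using c unfolding A_def by simp
  have "c * (2 * P + A) \<le> c * (c * E)"
    using h1 h2 h3 by (simp add: algebra_simps power2_eq_square)
  then have h4: "2 * P + A \<le> c * E" using c by simp
  have "G (x - \<gamma> *\<^sub>R q) = G x + D" unfolding D_def by simp
  then have "(norm (G (x - \<gamma> *\<^sub>R q)))\<^sup>2 = (norm (G x))\<^sup>2 + 2 * P + A"
    unfolding P_def A_def power2_norm_eq_inner
    by (simp add: inner_add_left inner_add_right inner_commute algebra_simps)
  then show ?thesis using h4 unfolding c_def E_def e_def by simp
qed

lemma grad_mono:
  fixes f :: "'a::real_inner \<Rightarrow> real"
  assumes cvx: "convex_on UNIV f" and der: "\<And>u. (f has_derivative (\<lambda>h. G u \<bullet> h)) (at u)"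
    and lip: "\<And>u v. norm (G u - G v) \<le> L * norm (u - v)" and L: "L > 0"
  shows "(y - x) \<bullet> (G y - G x) \<ge> 0"
proof -
  have "(norm (G y - G x))\<^sup>2 \<le> L * ((G y - G x) \<bullet> (y - x))"
    by (rule cocoercive[OF cvx der lip L])
  moreover have "0 \<le> (norm (G y - G x))\<^sup>2" by simp
  ultimately have "0 \<le> L * ((G y - G x) \<bullet> (y - x))" by linarith
  then show ?thesis using L by (simp add: inner_commute zero_le_mult_iff)
qed

lemma step_pt:
  fixes d v w :: "'a::real_inner"
  assumes m: "d \<bullet> (v - w) \<ge> 0" and s: "s \<ge> 0" and gam: "\<gamma> \<ge> 0"
  shows "(norm (d + s *\<^sub>R v + \<gamma> *\<^sub>R w))\<^sup>2 + \<gamma> * (s + \<gamma>) * (norm v)\<^sup>2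
     \<le> (norm (d + (s + \<gamma>) *\<^sub>R v))\<^sup>2 + \<gamma> * (s + \<gamma>) * (norm w)\<^sup>2"
proof -
  have id: "(norm (d + (s + \<gamma>) *\<^sub>R v))\<^sup>2 + \<gamma> * (s + \<gamma>) * (norm w)\<^sup>2
     - ((norm (d + s *\<^sub>R v + \<gamma> *\<^sub>R w))\<^sup>2 + \<gamma> * (s + \<gamma>) * (norm v)\<^sup>2)
     = 2 * \<gamma> * (d \<bullet> (v - w)) + s * \<gamma> * (norm (v - w))\<^sup>2"
    unfolding power2_norm_eq_inner by (simp add:  inner_add_left inner_add_right inner_diff_left inner_diff_right
        inner_commute algebra_simps power2_eq_square)
  have "0 \<le> 2 * \<gamma> * (d \<bullet> (v - w)) + s * \<gamma> * (norm (v - w))\<^sup>2"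
    using m s gam by simp
  then show ?thesis using id by linarith
qed


lemma lemA:
  fixes q :: "'b \<Rightarrow> 'a::euclidean_space"
  assumes D: "prob_space D" and qi: "integrable D q" and qm: "(\<integral>\<xi>. q \<xi> \<partial>D) = m"
    and bv: "(\<integral>\<^sup>+\<xi>. ennreal ((norm (q \<xi> - m))\<^sup>2) \<partial>D) \<le> ennreal (\<sigma>\<^sup>2)"
  shows "(\<integral>\<^sup>+\<xi>. ennreal ((norm (a + \<gamma> *\<^sub>R q \<xi>))\<^sup>2) \<partial>D) \<le> ennreal ((norm (a + \<gamma> *\<^sub>R m))\<^sup>2 + \<gamma>\<^sup>2 * \<sigma>\<^sup>2)"
proof -
  interpret prob_space D by (rule D)
  define b where "b = a + \<gamma> *\<^sub>R m"
  define e where "e \<xi> = q \<xi> - m" for \<xi>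
  have qmeas[measurable]: "q \<in> borel_measurable D" using qi by (rule borel_measurable_integrable)
  have ei: "integrable D e" unfolding e_def using qi by auto
  have e0: "(\<integral>\<xi>. e \<xi> \<partial>D) = 0" unfolding e_def using qi qm by (simp add: prob_space)
  have e2m[measurable]: "(\<lambda>\<xi>. (norm (e \<xi>))\<^sup>2) \<in> borel_measurable D" unfolding e_def by measurable
  have fin: "(\<integral>\<^sup>+\<xi>. ennreal ((norm (e \<xi>))\<^sup>2) \<partial>D) \<noteq> \<infinity>"
    using bv unfolding e_def by (auto simp: top_unique)
  then obtain r where r: "(\<integral>\<^sup>+\<xi>. ennreal ((norm (e \<xi>))\<^sup>2) \<partial>D) = ennreal r" and r0: "r \<ge> 0"
    by (cases "(\<integral>\<^sup>+\<xi>. ennreal ((norm (e \<xi>))\<^sup>2) \<partial>D)") auto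
  have e2i: "integrable D (\<lambda>\<xi>. (norm (e \<xi>))\<^sup>2)"
    by (rule integrableI_nn_integral_finite[OF e2m _ r]) auto
  have e2int: "(\<integral>\<xi>. (norm (e \<xi>))\<^sup>2 \<partial>D) \<le> \<sigma>\<^sup>2"
  proof -
    have "ennreal (\<integral>\<xi>. (norm (e \<xi>))\<^sup>2 \<partial>D) = (\<integral>\<^sup>+\<xi>. ennreal ((norm (e \<xi>))\<^sup>2) \<partial>D)"
      by (rule nn_integral_eq_integral[symmetric, OF e2i]) auto
    also have "\<dots> \<le> ennreal (\<sigma>\<^sup>2)" using bv unfolding e_def .
    finally show ?thesis by (auto simp: ennreal_le_iff2)
  qed
  have pt: "(norm (a + \<gamma> *\<^sub>R q \<xi>))\<^sup>2 = (norm b)\<^sup>2 + 2 * \<gamma> * (b \<bullet> e \<xi>) + \<gamma>\<^sup>2 * (norm (e \<xi>))\<^sup>2" for \<xi>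
  proof -
    have "a + \<gamma> *\<^sub>R q \<xi> = b + \<gamma> *\<^sub>R e \<xi>" unfolding b_def e_def by (simp add: algebra_simps)
    then show ?thesis unfolding power2_norm_eq_inner
      by (simp add: inner_add_left inner_add_right inner_commute algebra_simps power2_eq_square)
  qed
  have Ii: "integrable D (\<lambda>\<xi>. (norm b)\<^sup>2 + 2 * \<gamma> * (b \<bullet> e \<xi>) + \<gamma>\<^sup>2 * (norm (e \<xi>))\<^sup>2)"
    using ei e2i by simp
  have "(\<integral>\<^sup>+\<xi>. ennreal ((norm (a + \<gamma> *\<^sub>R q \<xi>))\<^sup>2) \<partial>D)
      = (\<integral>\<^sup>+\<xi>. ennreal ((norm b)\<^sup>2 + 2 * \<gamma> * (b \<bullet> e \<xi>) + \<gamma>\<^sup>2 * (norm (e \<xi>))\<^sup>2) \<partial>D)"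
    by (simp only: pt)
  also have "\<dots> = ennreal (\<integral>\<xi>. (norm b)\<^sup>2 + 2 * \<gamma> * (b \<bullet> e \<xi>) + \<gamma>\<^sup>2 * (norm (e \<xi>))\<^sup>2 \<partial>D)"
    by (rule nn_integral_eq_integral[OF Ii]) (auto simp: pt[symmetric])
  also have "(\<integral>\<xi>. (norm b)\<^sup>2 + 2 * \<gamma> * (b \<bullet> e \<xi>) + \<gamma>\<^sup>2 * (norm (e \<xi>))\<^sup>2 \<partial>D)
      = (norm b)\<^sup>2 + \<gamma>\<^sup>2 * (\<integral>\<xi>. (norm (e \<xi>))\<^sup>2 \<partial>D)"
    using ei e2i e0 by (simp add: prob_space)
  also have "ennreal ((norm b)\<^sup>2 + \<gamma>\<^sup>2 * (\<integral>\<xi>. (norm (e \<xi>))\<^sup>2 \<partial>D)) \<le> ennreal ((norm b)\<^sup>2 + \<gamma>\<^sup>2 * \<sigma>\<^sup>2)"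
    using e2int by (intro ennreal_leI add_left_mono mult_left_mono) auto
  finally show ?thesis unfolding b_def .
qed


lemma pearl_dep:
  "(\<And>j. j < k \<Longrightarrow> xs j = xs' j) \<Longrightarrow> pearl_local g gam y z xs k = pearl_local g gam y z xs' k"
  by (induction k) auto

lemma pearl_meas:
  fixes g :: "'b \<Rightarrow> 'a::euclidean_space \<Rightarrow> 'o \<Rightarrow> 'a"
  assumes gm: "(\<lambda>(\<xi>, u). g \<xi> u z) \<in> borel_measurable (D \<Otimes>\<^sub>M borel)"
  shows "k \<le> m \<Longrightarrow> (\<lambda>xs. pearl_local g gam y z xs k) \<in> borel_measurable (PiM {..<m} (\<lambda>_. D))"
proof (induction k)
  case 0 then show ?case by simp
next
  case (Suc k)
  then have IH: "(\<lambda>xs. pearl_local g gam y z xs k) \<in> borel_measurable (PiM {..<m} (\<lambda>_. D))" by simp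
  have c: "(\<lambda>xs. xs k) \<in> measurable (PiM {..<m} (\<lambda>_. D)) D"
    using Suc.prems by (intro measurable_component_singleton) auto
  have p: "(\<lambda>xs. (xs k, pearl_local g gam y z xs k)) \<in> measurable (PiM {..<m} (\<lambda>_. D)) (D \<Otimes>\<^sub>M borel)"
    using c IH by (rule measurable_Pair)
  have "(\<lambda>xs. (\<lambda>(\<xi>, u). g \<xi> u z) (xs k, pearl_local g gam y z xs k)) \<in> borel_measurable (PiM {..<m} (\<lambda>_. D))"
    by (rule measurable_compose[OF p gm])
  then have "(\<lambda>xs. g (xs k) (pearl_local g gam y z xs k) z) \<in> borel_measurable (PiM {..<m} (\<lambda>_. D))"
    by simp
  with IH show ?case by simp
qed

lemma nn_decomp:
  assumes D: "prob_space D"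
    and h: "h \<in> borel_measurable (PiM {..<Suc k} (\<lambda>_. D))"
  shows "(\<integral>\<^sup>+xs. h xs \<partial>PiM {..<Suc k} (\<lambda>_. D))
       = (\<integral>\<^sup>+xs. (\<integral>\<^sup>+\<xi>. h (xs(k := \<xi>)) \<partial>D) \<partial>PiM {..<k} (\<lambda>_. D))"
proof -
  interpret D: prob_space D by (rule D)
  interpret PS: product_sigma_finite "\<lambda>_. D"
    by (simp add: product_sigma_finite_def D.sigma_finite_measure_axioms)
  have e: "{..<Suc k} = insert k {..<k}" by auto
  show ?thesis using h unfolding e by (intro PS.product_nn_integral_insert) auto
qed

lemma ennreal_sub_le:
  assumes "a + ennreal K \<le> ennreal R" "K \<ge> 0"
  shows "a \<le> ennreal (R - K)"
proof (cases a)
  case (real q)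
  then have q0: "q \<ge> 0" by simp
  have "ennreal (q + K) \<le> ennreal R"
    using assms(1) unfolding real ennreal_plus[OF q0 assms(2), symmetric] .
  then have "q + K \<le> R \<or> (q + K \<le> 0 \<and> R \<le> 0)" unfolding ennreal_le_iff2 by auto
  then show ?thesis
  proof
    assume "q + K \<le> R" then show ?thesis using real by (auto intro!: ennreal_leI)
  next
    assume "q + K \<le> 0 \<and> R \<le> 0" then have "q = 0" using q0 assms(2) by linarith
    then show ?thesis using real by simp
  qed
next
  case top then show ?thesis using assms by (simp add: top_unique)
qed

lemma nn_integral_plus_const:
  assumes M: "prob_space M" and f: "f \<in> borel_measurable M" and c: "c \<ge> 0"
    and nn: "\<And>x. f x \<ge> 0"
  shows "(\<integral>\<^sup>+x. ennreal (f x + c) \<partial>M) = (\<integral>\<^sup>+x. ennreal (f x) \<partial>M) + ennreal c"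
proof -
  interpret prob_space M by (rule M)
  have "(\<integral>\<^sup>+x. ennreal (f x + c) \<partial>M) = (\<integral>\<^sup>+x. ennreal (f x) + ennreal c \<partial>M)"
    using nn c by (simp add: ennreal_plus)
  also have "\<dots> = (\<integral>\<^sup>+x. ennreal (f x) \<partial>M) + (\<integral>\<^sup>+x. ennreal c \<partial>M)"
    using f by (intro nn_integral_add) auto
  finally show ?thesis by (simp add: emeasure_space_1)
qed

theorem lemma2:
  fixes D :: "'b measure"
    and F :: "'b \<Rightarrow> 'a::euclidean_space \<Rightarrow> 'o \<Rightarrow> real"
    and g :: "'b \<Rightarrow> 'a \<Rightarrow> 'o \<Rightarrow> 'a"
    and f :: "'a \<Rightarrow> 'o \<Rightarrow> real"
    and G :: "'a \<Rightarrow> 'o \<Rightarrow> 'a"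
    and L \<sigma> \<gamma> :: real and \<tau> t :: nat
    and y :: 'a and z :: 'o
  assumes D: "prob_space D"
    and F_grad: "\<And>\<xi> u w. \<xi> \<in> space D \<Longrightarrow>
                   ((\<lambda>v. F \<xi> v w) has_derivative (\<lambda>h. g \<xi> u w \<bullet> h)) (at u)"
    and F_int: "\<And>u w. integrable D (\<lambda>\<xi>. F \<xi> u w)"
    and f_def: "\<And>u w. f u w = (\<integral>\<xi>. F \<xi> u w \<partial>D)"
    and f_grad: "\<And>u w. ((\<lambda>v. f v w) has_derivative (\<lambda>h. G u w \<bullet> h)) (at u)"
    and g_meas: "\<And>w. (\<lambda>(\<xi>, u). g \<xi> u w) \<in> borel_measurable (D \<Otimes>\<^sub>M borel)"
    and g_int: "\<And>u w. integrable D (\<lambda>\<xi>. g \<xi> u w)"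
    and unbiased: "\<And>u w. (\<integral>\<xi>. g \<xi> u w \<partial>D) = G u w"
    and CVX: "\<And>w. convex_on UNIV (\<lambda>v. f v w)"
    and SM: "\<And>u v w. norm (G u w - G v w) \<le> L * norm (u - v)"
    and BV: "\<And>u w. (\<integral>\<^sup>+\<xi>. ennreal ((norm (g \<xi> u w - G u w))\<^sup>2) \<partial>D) \<le> ennreal (\<sigma>\<^sup>2)"
    and L_pos: "L > 0"
    and tau: "\<tau> \<ge> 1"
    and gam_pos: "\<gamma> > 0"
    and gam1: "\<gamma> \<le> 1 / L"
    and gam2: "\<tau> \<ge> 2 \<Longrightarrow> \<gamma> \<le> 1 / (L * (real \<tau> - 1))"
    and t: "t \<le> \<tau>"
  shows "(\<integral>\<^sup>+xs. ennreal ((norm (y - pearl_local g \<gamma> y z xs t))\<^sup>2)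
            \<partial>(PiM {..<t} (\<lambda>_. D)))
         \<le> ennreal (\<gamma>\<^sup>2 * (real t)\<^sup>2 * (norm (G y z))\<^sup>2
                    + \<gamma>\<^sup>2 * real t * (1 + 2 * (real t - 1) * (real t + 1) * \<gamma> * L) * \<sigma>\<^sup>2)"
proof -
  interpret D: prob_space D by (rule D)
  define P where "P k = PiM {..<k} (\<lambda>_. D)" for k :: nat
  define X where "X k xs = pearl_local g \<gamma> y z xs k" for k :: nat and xs
  define v where "v = G y z"
  have gL: "\<gamma> * L \<le> 1" using gam1 L_pos by (simp add: field_simps)
  have Pprob: "prob_space (P k)" for k unfolding P_def by (rule prob_space_PiM) (rule D)
  have Xm[measurable]: "X k \<in> borel_measurable (P k)" for k
    unfolding X_def[abs_def] P_def using pearl_meas[where g=g and z=z and D=D, OF g_meas[of z]] by auto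
  have Xm2[measurable]: "X k \<in> borel_measurable (P (Suc k))" for k
    unfolding X_def[abs_def] P_def using pearl_meas[where g=g and z=z and D=D, OF g_meas[of z]] by auto
  have lipG: "L-lipschitz_on UNIV (\<lambda>u. G u z)"
    using SM L_pos by (intro lipschitz_onI) (auto simp: dist_norm)
  have Gm[measurable]: "(\<lambda>u. G u z) \<in> borel_measurable borel"
    by (rule borel_measurable_continuous_onI[OF lipschitz_on_continuous_on[OF lipG]])
  have GXm: "(\<lambda>xs. G (X k xs) z) \<in> borel_measurable (P m)"
    if "X k \<in> borel_measurable (P m)" for k m
    using measurable_compose[OF that Gm] by simp
  have gDm[measurable]: "(\<lambda>\<xi>. g \<xi> u z) \<in> borel_measurable D" for u
    using g_int by (rule borel_measurable_integrable)
  have Xsuc: "X (Suc k) (xs(k := \<xi>)) = X k xs - \<gamma> *\<^sub>R g \<xi> (X k xs) z" for k xs \<xi>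
  proof -
    have "X k (xs(k := \<xi>)) = X k xs" unfolding X_def by (rule pearl_dep) auto
    then show ?thesis unfolding X_def by simp
  qed
  have cvx: "convex_on UNIV (\<lambda>v. f v z)" by (rule CVX)
  have der: "\<And>u. ((\<lambda>v. f v z) has_derivative (\<lambda>h. G u z \<bullet> h)) (at u)" by (rule f_grad)
  have lip: "\<And>u v. norm (G u z - G v z) \<le> L * norm (u - v)" by (rule SM)

  have inner1: "(\<integral>\<^sup>+\<xi>. ennreal ((norm (G (u - \<gamma> *\<^sub>R g \<xi> u z) z))\<^sup>2) \<partial>D)
      \<le> ennreal ((norm (G u z))\<^sup>2 + \<gamma> * L * \<sigma>\<^sup>2)" for u
  proof -
    have "(\<integral>\<^sup>+\<xi>. ennreal ((norm (G (u - \<gamma> *\<^sub>R g \<xi> u z) z))\<^sup>2) \<partial>D)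
        \<le> (\<integral>\<^sup>+\<xi>. ennreal ((norm (G u z))\<^sup>2) + ennreal (\<gamma> * L) * ennreal ((norm (g \<xi> u z - G u z))\<^sup>2) \<partial>D)"
    proof (rule nn_integral_mono)
      fix \<xi>
      have "(norm (G (u - \<gamma> *\<^sub>R g \<xi> u z) z))\<^sup>2 \<le> (norm (G u z))\<^sup>2 + \<gamma> * L * (norm (g \<xi> u z - G u z))\<^sup>2"
        by (rule grad_step[OF cvx der lip L_pos gam_pos gL])
      then show "ennreal ((norm (G (u - \<gamma> *\<^sub>R g \<xi> u z) z))\<^sup>2)
          \<le> ennreal ((norm (G u z))\<^sup>2) + ennreal (\<gamma> * L) * ennreal ((norm (g \<xi> u z - G u z))\<^sup>2)"
      proof -
        have "ennreal ((norm (G (u - \<gamma> *\<^sub>R g \<xi> u z) z))\<^sup>2)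
            \<le> ennreal ((norm (G u z))\<^sup>2 + (\<gamma> * L) * (norm (g \<xi> u z - G u z))\<^sup>2)"
          by (rule ennreal_leI) fact
        also have "\<dots> = ennreal ((norm (G u z))\<^sup>2) + ennreal (\<gamma> * L) * ennreal ((norm (g \<xi> u z - G u z))\<^sup>2)"
          using gam_pos L_pos by (simp add: ennreal_plus ennreal_mult)
        finally show ?thesis .
      qed
    qed
    also have "\<dots> = ennreal ((norm (G u z))\<^sup>2) + ennreal (\<gamma> * L) * (\<integral>\<^sup>+\<xi>. ennreal ((norm (g \<xi> u z - G u z))\<^sup>2) \<partial>D)"
      by (subst nn_integral_add) (auto simp: nn_integral_cmult D.emeasure_space_1)
    also have "\<dots> \<le> ennreal ((norm (G u z))\<^sup>2) + ennreal (\<gamma> * L) * ennreal (\<sigma>\<^sup>2)"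
      using BV by (intro add_left_mono mult_left_mono) auto
    also have "\<dots> = ennreal ((norm (G u z))\<^sup>2 + \<gamma> * L * \<sigma>\<^sup>2)"
      using gam_pos L_pos by (simp add: ennreal_plus ennreal_mult)
    finally show ?thesis .
  qed

  have E1: "(\<integral>\<^sup>+xs. ennreal ((norm (G (X k xs) z))\<^sup>2) \<partial>P k) \<le> ennreal ((norm v)\<^sup>2 + real k * \<gamma> * L * \<sigma>\<^sup>2)" for k
  proof (induction k)
    case 0
    interpret P0: prob_space "P 0" by (rule Pprob)
    show ?case by (simp add: X_def v_def P0.emeasure_space_1)
  next
    case (Suc k)
    have m: "(\<lambda>xs. ennreal ((norm (G (X (Suc k) xs) z))\<^sup>2)) \<in> borel_measurable (P (Suc k))"
      using GXm[OF Xm] by measurable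
    have "(\<integral>\<^sup>+xs. ennreal ((norm (G (X (Suc k) xs) z))\<^sup>2) \<partial>P (Suc k))
        = (\<integral>\<^sup>+xs. (\<integral>\<^sup>+\<xi>. ennreal ((norm (G (X (Suc k) (xs(k := \<xi>))) z))\<^sup>2) \<partial>D) \<partial>P k)"
      using m unfolding P_def by (rule nn_decomp[OF D])
    also have "\<dots> = (\<integral>\<^sup>+xs. (\<integral>\<^sup>+\<xi>. ennreal ((norm (G (X k xs - \<gamma> *\<^sub>R g \<xi> (X k xs) z) z))\<^sup>2) \<partial>D) \<partial>P k)"
      by (simp only: Xsuc)
    also have "\<dots> \<le> (\<integral>\<^sup>+xs. ennreal ((norm (G (X k xs) z))\<^sup>2 + \<gamma> * L * \<sigma>\<^sup>2) \<partial>P k)"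
      by (intro nn_integral_mono inner1)
    also have "\<dots> = (\<integral>\<^sup>+xs. ennreal ((norm (G (X k xs) z))\<^sup>2) \<partial>P k) + ennreal (\<gamma> * L * \<sigma>\<^sup>2)"
      using gam_pos L_pos GXm[OF Xm] by (intro nn_integral_plus_const Pprob) auto
    also have "\<dots> \<le> ennreal ((norm v)\<^sup>2 + real k * \<gamma> * L * \<sigma>\<^sup>2) + ennreal (\<gamma> * L * \<sigma>\<^sup>2)"
      using Suc by (rule add_right_mono)
    also have "\<dots> = ennreal ((norm v)\<^sup>2 + real (Suc k) * \<gamma> * L * \<sigma>\<^sup>2)"
      using gam_pos L_pos by (subst ennreal_plus[symmetric]) (auto simp: ring_distribs)
    finally show ?case .
  qed
  have kk: "0 \<le> real k * (real k - 1)" for k :: nat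
    by (cases k) auto
  define Bd where "Bd k s = (s + real k * \<gamma>)\<^sup>2 * (norm v)\<^sup>2 + real k * \<gamma>\<^sup>2 * \<sigma>\<^sup>2
      + \<gamma>\<^sup>2 * L * \<sigma>\<^sup>2 * (real k * (real k - 1) * (s + real k * \<gamma>))" for k :: nat and s
  have Bd0: "0 \<le> Bd k s" if "s \<ge> 0" for k s
  proof -
    have a: "0 \<le> (s + real k * \<gamma>)\<^sup>2 * (norm v)\<^sup>2" by simp
    have b: "0 \<le> real k * \<gamma>\<^sup>2 * \<sigma>\<^sup>2" by simp
    have c: "0 \<le> \<gamma>\<^sup>2 * L * \<sigma>\<^sup>2" using L_pos by simp
    have d: "0 \<le> real k * (real k - 1) * (s + real k * \<gamma>)"
      by (rule mult_nonneg_nonneg[OF kk]) (use that gam_pos in simp)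
    show ?thesis unfolding Bd_def using a b mult_nonneg_nonneg[OF c d] by linarith
  qed
  have E2: "s \<ge> 0 \<Longrightarrow> (\<integral>\<^sup>+xs. ennreal ((norm (y - X k xs + s *\<^sub>R v))\<^sup>2) \<partial>P k) \<le> ennreal (Bd k s)" for k s
  proof (induction k arbitrary: s)
    case 0
    interpret P0: prob_space "P 0" by (rule Pprob)
    show ?case using 0 by (simp add: X_def Bd_def P0.emeasure_space_1 power_mult_distrib)
  next
    case (Suc k s)
    define K where "K = \<gamma> * (s + \<gamma>) * (norm v)\<^sup>2"
    define c where "c = \<gamma> * (s + \<gamma>)"
    have K0: "K \<ge> 0" unfolding K_def using Suc.prems gam_pos by simp
    have c0: "c \<ge> 0" unfolding c_def using Suc.prems gam_pos by simp
    have m: "(\<lambda>xs. ennreal ((norm (y - X (Suc k) xs + s *\<^sub>R v))\<^sup>2)) \<in> borel_measurable (P (Suc k))"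
      by measurable
    have GXk[measurable]: "(\<lambda>xs. G (X k xs) z) \<in> borel_measurable (P k)" by (rule GXm[OF Xm])
    have eq: "y - X (Suc k) (xs(k := \<xi>)) + s *\<^sub>R v = (y - X k xs + s *\<^sub>R v) + \<gamma> *\<^sub>R g \<xi> (X k xs) z" for xs \<xi>
      by (simp add: Xsuc algebra_simps)
    have "(\<integral>\<^sup>+xs. ennreal ((norm (y - X (Suc k) xs + s *\<^sub>R v))\<^sup>2) \<partial>P (Suc k))
        = (\<integral>\<^sup>+xs. (\<integral>\<^sup>+\<xi>. ennreal ((norm (y - X (Suc k) (xs(k := \<xi>)) + s *\<^sub>R v))\<^sup>2) \<partial>D) \<partial>P k)"
      using m unfolding P_def by (rule nn_decomp[OF D])
    also have "\<dots> = (\<integral>\<^sup>+xs. (\<integral>\<^sup>+\<xi>. ennreal ((norm ((y - X k xs + s *\<^sub>R v) + \<gamma> *\<^sub>R g \<xi> (X k xs) z))\<^sup>2) \<partial>D) \<partial>P k)"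
      by (simp only: eq)
    also have "\<dots> \<le> (\<integral>\<^sup>+xs. ennreal ((norm ((y - X k xs + s *\<^sub>R v) + \<gamma> *\<^sub>R G (X k xs) z))\<^sup>2 + \<gamma>\<^sup>2 * \<sigma>\<^sup>2) \<partial>P k)"
      by (intro nn_integral_mono lemA[OF D g_int unbiased BV])
    finally have I1: "(\<integral>\<^sup>+xs. ennreal ((norm (y - X (Suc k) xs + s *\<^sub>R v))\<^sup>2) \<partial>P (Suc k))
        \<le> (\<integral>\<^sup>+xs. ennreal ((norm ((y - X k xs + s *\<^sub>R v) + \<gamma> *\<^sub>R G (X k xs) z))\<^sup>2 + \<gamma>\<^sup>2 * \<sigma>\<^sup>2) \<partial>P k)" .
    have "(\<integral>\<^sup>+xs. ennreal ((norm (y - X (Suc k) xs + s *\<^sub>R v))\<^sup>2) \<partial>P (Suc k)) + ennreal K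
        \<le> (\<integral>\<^sup>+xs. ennreal ((norm ((y - X k xs + s *\<^sub>R v) + \<gamma> *\<^sub>R G (X k xs) z))\<^sup>2 + \<gamma>\<^sup>2 * \<sigma>\<^sup>2) \<partial>P k) + ennreal K"
      using I1 by (rule add_right_mono)
    also have "\<dots> = (\<integral>\<^sup>+xs. ennreal ((norm ((y - X k xs + s *\<^sub>R v) + \<gamma> *\<^sub>R G (X k xs) z))\<^sup>2 + \<gamma>\<^sup>2 * \<sigma>\<^sup>2 + K) \<partial>P k)"
      using K0 by (intro nn_integral_plus_const[symmetric] Pprob) auto
    also have "\<dots> \<le> (\<integral>\<^sup>+xs. ennreal ((norm (y - X k xs + (s + \<gamma>) *\<^sub>R v))\<^sup>2)
          + ennreal c * ennreal ((norm (G (X k xs) z))\<^sup>2) + ennreal (\<gamma>\<^sup>2 * \<sigma>\<^sup>2) \<partial>P k)"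
    proof (rule nn_integral_mono)
      fix xs
      have mono: "(y - X k xs) \<bullet> (v - G (X k xs) z) \<ge> 0"
        unfolding v_def by (rule grad_mono[OF cvx der lip L_pos])
      have "(norm (y - X k xs + s *\<^sub>R v + \<gamma> *\<^sub>R G (X k xs) z))\<^sup>2 + \<gamma> * (s + \<gamma>) * (norm v)\<^sup>2
          \<le> (norm (y - X k xs + (s + \<gamma>) *\<^sub>R v))\<^sup>2 + \<gamma> * (s + \<gamma>) * (norm (G (X k xs) z))\<^sup>2"
        by (rule step_pt[OF mono Suc.prems]) (use gam_pos in simp)
      then have "ennreal ((norm ((y - X k xs + s *\<^sub>R v) + \<gamma> *\<^sub>R G (X k xs) z))\<^sup>2 + \<gamma>\<^sup>2 * \<sigma>\<^sup>2 + K)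
          \<le> ennreal ((norm (y - X k xs + (s + \<gamma>) *\<^sub>R v))\<^sup>2 + c * (norm (G (X k xs) z))\<^sup>2 + \<gamma>\<^sup>2 * \<sigma>\<^sup>2)"
        unfolding K_def c_def by (intro ennreal_leI) linarith
      also have "\<dots> = ennreal ((norm (y - X k xs + (s + \<gamma>) *\<^sub>R v))\<^sup>2)
          + ennreal c * ennreal ((norm (G (X k xs) z))\<^sup>2) + ennreal (\<gamma>\<^sup>2 * \<sigma>\<^sup>2)"
        using c0 by (simp add: ennreal_plus ennreal_mult)
      finally show "ennreal ((norm ((y - X k xs + s *\<^sub>R v) + \<gamma> *\<^sub>R G (X k xs) z))\<^sup>2 + \<gamma>\<^sup>2 * \<sigma>\<^sup>2 + K)
          \<le> ennreal ((norm (y - X k xs + (s + \<gamma>) *\<^sub>R v))\<^sup>2)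
          + ennreal c * ennreal ((norm (G (X k xs) z))\<^sup>2) + ennreal (\<gamma>\<^sup>2 * \<sigma>\<^sup>2)" .
    qed
    also have "\<dots> = (\<integral>\<^sup>+xs. ennreal ((norm (y - X k xs + (s + \<gamma>) *\<^sub>R v))\<^sup>2) \<partial>P k)
          + ennreal c * (\<integral>\<^sup>+xs. ennreal ((norm (G (X k xs) z))\<^sup>2) \<partial>P k) + ennreal (\<gamma>\<^sup>2 * \<sigma>\<^sup>2)"
    proof -
      interpret Pk: prob_space "P k" by (rule Pprob)
      show ?thesis
        by (subst nn_integral_add, measurable, subst nn_integral_add, measurable)
          (simp add: nn_integral_cmult Pk.emeasure_space_1)
    qed
    also have "\<dots> \<le> ennreal (Bd k (s + \<gamma>)) + ennreal c * ennreal ((norm v)\<^sup>2 + real k * \<gamma> * L * \<sigma>\<^sup>2)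
          + ennreal (\<gamma>\<^sup>2 * \<sigma>\<^sup>2)"
      using Suc.IH[of "s + \<gamma>"] Suc.prems gam_pos E1[of k]
      by (intro add_mono mult_left_mono order_refl) auto
    also have "\<dots> = ennreal (Bd k (s + \<gamma>) + c * ((norm v)\<^sup>2 + real k * \<gamma> * L * \<sigma>\<^sup>2) + \<gamma>\<^sup>2 * \<sigma>\<^sup>2)"
      using c0 Bd0[of "s + \<gamma>" k] Suc.prems gam_pos L_pos
      by (simp add: ennreal_plus ennreal_mult)
    finally have fin: "(\<integral>\<^sup>+xs. ennreal ((norm (y - X (Suc k) xs + s *\<^sub>R v))\<^sup>2) \<partial>P (Suc k)) + ennreal K
        \<le> ennreal (Bd k (s + \<gamma>) + c * ((norm v)\<^sup>2 + real k * \<gamma> * L * \<sigma>\<^sup>2) + \<gamma>\<^sup>2 * \<sigma>\<^sup>2)" .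
    have ar: "Bd (Suc k) s - (Bd k (s + \<gamma>) + c * ((norm v)\<^sup>2 + real k * \<gamma> * L * \<sigma>\<^sup>2) + \<gamma>\<^sup>2 * \<sigma>\<^sup>2 - K)
        = \<gamma>\<^sup>2 * L * \<sigma>\<^sup>2 * (real k * (s + (2 * real k + 1) * \<gamma>))"
      unfolding Bd_def K_def c_def by (simp add: power2_eq_square algebra_simps)
    have "0 \<le> \<gamma>\<^sup>2 * L * \<sigma>\<^sup>2 * (real k * (s + (2 * real k + 1) * \<gamma>))"
      using Suc.prems gam_pos L_pos by simp
    then have ar2: "Bd k (s + \<gamma>) + c * ((norm v)\<^sup>2 + real k * \<gamma> * L * \<sigma>\<^sup>2) + \<gamma>\<^sup>2 * \<sigma>\<^sup>2 - K \<le> Bd (Suc k) s"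
      using ar by linarith
    have "(\<integral>\<^sup>+xs. ennreal ((norm (y - X (Suc k) xs + s *\<^sub>R v))\<^sup>2) \<partial>P (Suc k))
        \<le> ennreal (Bd k (s + \<gamma>) + c * ((norm v)\<^sup>2 + real k * \<gamma> * L * \<sigma>\<^sup>2) + \<gamma>\<^sup>2 * \<sigma>\<^sup>2 - K)"
      by (rule ennreal_sub_le[OF fin K0])
    also have "\<dots> \<le> ennreal (Bd (Suc k) s)" using ar2 by (rule ennreal_leI)
    finally show ?case .
  qed
  have main: "(\<integral>\<^sup>+xs. ennreal ((norm (y - X t xs + 0 *\<^sub>R v))\<^sup>2) \<partial>P t) \<le> ennreal (Bd t 0)"
    by (rule E2) simp
  have ar: "\<gamma>\<^sup>2 * (real t)\<^sup>2 * (norm (G y z))\<^sup>2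
                    + \<gamma>\<^sup>2 * real t * (1 + 2 * (real t - 1) * (real t + 1) * \<gamma> * L) * \<sigma>\<^sup>2 - Bd t 0
      = \<gamma>\<^sup>2 * L * \<sigma>\<^sup>2 * \<gamma> * ((real t * (real t - 1)) * (real t + 2))"
    unfolding Bd_def v_def by (simp add: power2_eq_square algebra_simps)
  have "0 \<le> \<gamma>\<^sup>2 * L * \<sigma>\<^sup>2 * \<gamma> * ((real t * (real t - 1)) * (real t + 2))"
    using kk[of t] gam_pos L_pos by simp
  then have "Bd t 0 \<le> \<gamma>\<^sup>2 * (real t)\<^sup>2 * (norm (G y z))\<^sup>2
                    + \<gamma>\<^sup>2 * real t * (1 + 2 * (real t - 1) * (real t + 1) * \<gamma> * L) * \<sigma>\<^sup>2"
    using ar by linarith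
  then have "ennreal (Bd t 0) \<le> ennreal (\<gamma>\<^sup>2 * (real t)\<^sup>2 * (norm (G y z))\<^sup>2
                    + \<gamma>\<^sup>2 * real t * (1 + 2 * (real t - 1) * (real t + 1) * \<gamma> * L) * \<sigma>\<^sup>2)"
    by (rule ennreal_leI)
  with main show ?thesis unfolding X_def P_def by simp
qed

end
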